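(* When $n$ agents have additive valuations over chores and equal entitlements, the AlgChores allocation algorithm gives every agent $i$ a bundle of cost at most $\frac{4n-1}{3n}APS_i$.
   Context: A set $\mathcal{M}$ of $m$ indivisible chores is allocated to $n$ agents, each agent $i$ having an additive disvaluation (cost) function $c_i$ and entitlement (responsibility) $b_i=\frac{1}{n}$. The anyprice share for chores is $APS(c_i,b_i)=\max_{P}\min_{\{S\subseteq\mathcal{M}\,:\,\sum_{j\in S}p_j\ge b_i\}} c_i(S)$, where $P=(p_1,\ldots,p_m)$ ranges over nonnegative price vectors with $\sum_j p_j=1$. An instance is identically ordered (IDO) if chores can be indexed $e_1,\ldots,e_m$ so that $c_i(e_j)\ge c_i(e_k)$ for every agent $i$ and every $j<k$. AlgChores (of Barman and Krishnamurthy 2020), on an IDO instance: start with all bundles empty; for $r=1,\ldots,m$, choose an agent $i$ who envies no other agent, add chore $e_r$ to her bundle, and then resolve envy cycles (by rotating bundles along cycles in the envy graph); output the resulting allocation. On general instances, AlgChores is run via the standard reduction to IDO instances, which preserves the approximation guarantee. *)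

theory Defs
  imports Main "HOL.Real"
begin

text \<open>Agents are 0..n-1, chores are 0..m-1 (chore j corresponds to e_(j+1)).
  A cost profile is c :: nat => nat => real, c i j = cost of chore j for agent i.\<close>

definition cost :: "(nat \<Rightarrow> nat \<Rightarrow> real) \<Rightarrow> nat \<Rightarrow> nat set \<Rightarrow> real" where
  "cost c i S = (\<Sum>j\<in>S. c i j)"

definition aps_chores :: "nat \<Rightarrow> (nat \<Rightarrow> real) \<Rightarrow> real \<Rightarrow> real" where
  "aps_chores m ci b =
     Sup ((\<lambda>p. Min ((\<lambda>S. \<Sum>j\<in>S. ci j) ` {S. S \<subseteq> {..<m} \<and> (\<Sum>j\<in>S. p j) \<ge> b}))
          ` {p :: nat \<Rightarrow> real. (\<forall>j<m. 0 \<le> p j) \<and> (\<Sum>j<m. p j) = 1})"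

definition is_ido :: "(nat \<Rightarrow> nat \<Rightarrow> real) \<Rightarrow> nat \<Rightarrow> nat \<Rightarrow> bool" where
  "is_ido c n m \<longleftrightarrow> (\<forall>i<n. \<forall>j k. j < k \<and> k < m \<longrightarrow> c i k \<le> c i j)"

definition envies :: "(nat \<Rightarrow> nat \<Rightarrow> real) \<Rightarrow> (nat \<Rightarrow> nat set) \<Rightarrow> nat \<Rightarrow> nat \<Rightarrow> bool" where
  "envies c A i k \<longleftrightarrow> cost c i (A k) < cost c i (A i)"

definition is_envy_cycle :: "(nat \<Rightarrow> nat \<Rightarrow> real) \<Rightarrow> nat \<Rightarrow> (nat \<Rightarrow> nat set) \<Rightarrow> nat list \<Rightarrow> bool" where
  "is_envy_cycle c n A cyc \<longleftrightarrow> 2 \<le> length cyc \<and> distinct cyc \<and> set cyc \<subseteq> {..<n} \<and>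
     (\<forall>j<length cyc. envies c A (cyc ! j) (cyc ! ((j + 1) mod length cyc)))"

definition rotate_cycle :: "(nat \<Rightarrow> nat \<Rightarrow> real) \<Rightarrow> nat \<Rightarrow> (nat \<Rightarrow> nat set) \<Rightarrow> (nat \<Rightarrow> nat set) \<Rightarrow> bool" where
  "rotate_cycle c n A A' \<longleftrightarrow> (\<exists>cyc. is_envy_cycle c n A cyc \<and>
     (\<forall>j<length cyc. A' (cyc ! j) = A (cyc ! ((j + 1) mod length cyc))) \<and>
     (\<forall>a. a \<notin> set cyc \<longrightarrow> A' a = A a))"

definition resolve_cycles :: "(nat \<Rightarrow> nat \<Rightarrow> real) \<Rightarrow> nat \<Rightarrow> (nat \<Rightarrow> nat set) \<Rightarrow> (nat \<Rightarrow> nat set) \<Rightarrow> bool" where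
  "resolve_cycles c n A A' \<longleftrightarrow> (rotate_cycle c n)\<^sup>*\<^sup>* A A' \<and> \<not> (\<exists>cyc. is_envy_cycle c n A' cyc)"

text \<open>Executions of AlgChores on an IDO instance: alg_chores_ido c n r A means that after
  allocating chores 0..r-1 (= e_1..e_r) some execution can be in state A.
  The output allocations are those A with alg_chores_ido c n m A.\<close>
inductive alg_chores_ido :: "(nat \<Rightarrow> nat \<Rightarrow> real) \<Rightarrow> nat \<Rightarrow> nat \<Rightarrow> (nat \<Rightarrow> nat set) \<Rightarrow> bool"
  for c n where
  init: "alg_chores_ido c n 0 (\<lambda>_. {})"
| step: "\<lbrakk> alg_chores_ido c n r A; i < n; \<forall>k<n. \<not> envies c A i k;
          resolve_cycles c n (A(i := insert r (A i))) A' \<rbrakk>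
        \<Longrightarrow> alg_chores_ido c n (Suc r) A'"

text \<open>Standard reduction to IDO instances. The IDO instance: agent i's cost for chore j is
  her (j+1)-th largest cost.\<close>
definition ido_of :: "(nat \<Rightarrow> nat \<Rightarrow> real) \<Rightarrow> nat \<Rightarrow> nat \<Rightarrow> nat \<Rightarrow> real" where
  "ido_of c m i j = rev (sort (map (c i) [0..<m])) ! j"

text \<open>Converting an allocation A of the IDO instance back: for j = m-1 down to 0, the agent
  holding chore j in A picks a least costly (for her) remaining chore.
  reduction_pick c n m A k R B: after k picks, R is the set of remaining chores, B the allocation.\<close>
inductive reduction_pick :: "(nat \<Rightarrow> nat \<Rightarrow> real) \<Rightarrow> nat \<Rightarrow> nat \<Rightarrow> (nat \<Rightarrow> nat set)
    \<Rightarrow> nat \<Rightarrow> nat set \<Rightarrow> (nat \<Rightarrow> nat set) \<Rightarrow> bool"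
  for c n m A where
  init: "reduction_pick c n m A 0 {..<m} (\<lambda>_. {})"
| step: "\<lbrakk> reduction_pick c n m A k R B; k < m; i < n; m - 1 - k \<in> A i;
          e \<in> R; \<forall>e'\<in>R. c i e \<le> c i e' \<rbrakk>
        \<Longrightarrow> reduction_pick c n m A (Suc k) (R - {e}) (B(i := insert e (B i)))"

end

theory Submission
  imports Defs "HOL-Combinatorics.List_Permutation"
begin

definition valid_p :: "nat \<Rightarrow> (nat \<Rightarrow> real) \<Rightarrow> bool" where
  "valid_p m p \<longleftrightarrow> (\<forall>j<m. 0 \<le> p j) \<and> (\<Sum>j<m. p j) = 1"

lemma aps_ge:
  assumes "valid_p m p" "b \<le> 1"
  shows "\<exists>S\<subseteq>{..<m}. b \<le> (\<Sum>j\<in>S. p j) \<and> (\<Sum>j\<in>S. ci j) \<le> aps_chores m ci b"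
proof -
  let ?F = "\<lambda>p. Min ((\<lambda>S. \<Sum>j\<in>S. ci j) ` {S. S \<subseteq> {..<m} \<and> (\<Sum>j\<in>S. p j) \<ge> b})"
  let ?P = "{p :: nat \<Rightarrow> real. (\<forall>j<m. 0 \<le> p j) \<and> (\<Sum>j<m. p j) = 1}"
  have fin: "finite {S. S \<subseteq> {..<m} \<and> (\<Sum>j\<in>S. q j) \<ge> b}" for q
    by (rule finite_subset[of _ "Pow {..<m}"]) auto
  have mem: "{..<m} \<in> {S. S \<subseteq> {..<m} \<and> (\<Sum>j\<in>S. q j) \<ge> b}" if "q \<in> ?P" for q
    using that assms(2) by auto
  have bdd: "bdd_above (?F ` ?P)"
  proof (rule bdd_aboveI2)
    fix q assume "q \<in> ?P"
    then show "?F q \<le> (\<Sum>j<m. ci j)"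
      using fin[of q] mem[of q] by (intro Min_le) auto
  qed
  have pP: "p \<in> ?P" using assms(1) unfolding valid_p_def by auto
  have "?F p \<in> (\<lambda>S. \<Sum>j\<in>S. ci j) ` {S. S \<subseteq> {..<m} \<and> (\<Sum>j\<in>S. p j) \<ge> b}"
    using fin[of p] mem[OF pP] by (intro Min_in) auto
  then obtain S where S: "S \<subseteq> {..<m}" "b \<le> (\<Sum>j\<in>S. p j)" "?F p = (\<Sum>j\<in>S. ci j)" by auto
  have "?F p \<le> aps_chores m ci b" unfolding aps_chores_def
    using bdd pP by (intro cSup_upper) auto
  with S show ?thesis by auto
qed

lemma aps_le:
  assumes "1 \<le> m"
    and H: "\<And>p. valid_p m p \<Longrightarrow> \<exists>S\<subseteq>{..<m}. b \<le> (\<Sum>j\<in>S. p j) \<and> (\<Sum>j\<in>S. ci j) \<le> X"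
  shows "aps_chores m ci b \<le> X"
proof -
  let ?F = "\<lambda>p. Min ((\<lambda>S. \<Sum>j\<in>S. ci j) ` {S. S \<subseteq> {..<m} \<and> (\<Sum>j\<in>S. p j) \<ge> b})"
  let ?P = "{p :: nat \<Rightarrow> real. (\<forall>j<m. 0 \<le> p j) \<and> (\<Sum>j<m. p j) = 1}"
  let ?p0 = "\<lambda>j::nat. if j = 0 then 1 else (0::real)"
  have mem: "?p0 \<in> ?P" using assms(1) by (simp add: sum.delta)
  have ne: "?F ` ?P \<noteq> {}"
  proof
    assume "?F ` ?P = {}"
    then have "?P = {}" by (simp only: image_is_empty)
    with mem show False by (simp only: empty_iff)
  qed
  have le: "x \<le> X" if xin: "x \<in> ?F ` ?P" for x
  proof -
    obtain p where p0: "p \<in> ?P" and x: "x = ?F p" using xin by (rule imageE)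
    then have p: "valid_p m p" unfolding valid_p_def by simp
    obtain S where S: "S\<subseteq>{..<m}" "b \<le> (\<Sum>j\<in>S. p j)" "(\<Sum>j\<in>S. ci j) \<le> X" using H[OF p] by blast
    have fin: "finite {S. S \<subseteq> {..<m} \<and> (\<Sum>j\<in>S. p j) \<ge> b}"
      by (rule finite_subset[of _ "Pow {..<m}"]) auto
    have "x \<le> (\<Sum>j\<in>S. ci j)" unfolding x using fin S by (intro Min_le) auto
    with S show "x \<le> X" by linarith
  qed
  show ?thesis unfolding aps_chores_def using ne le by (rule cSup_least)
qed

lemma aps_ge_chore:
  assumes "j0 < m" "0 < b" "b \<le> 1" "\<forall>j<m. 0 \<le> ci j"
  shows "ci j0 \<le> aps_chores m ci b"
proof -
  let ?p = "\<lambda>j::nat. if j = j0 then 1 else (0::real)"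
  have v: "valid_p m ?p" using assms(1) unfolding valid_p_def by (simp add: sum.delta)
  obtain S where S: "S\<subseteq>{..<m}" "b \<le> (\<Sum>j\<in>S. ?p j)" "(\<Sum>j\<in>S. ci j) \<le> aps_chores m ci b"
    using aps_ge[OF v assms(3)] by blast
  have fS: "finite S" using S(1) finite_subset by blast
  have "j0 \<in> S"
  proof (rule ccontr)
    assume "j0 \<notin> S" then have "(\<Sum>j\<in>S. ?p j) = 0" by (intro sum.neutral) auto
    with S(2) assms(2) show False by simp
  qed
  then have "ci j0 \<le> (\<Sum>j\<in>S. ci j)"
    using fS S(1) assms(4) by (intro member_le_sum) auto
  with S show ?thesis by linarith
qed

lemma aps_ge_prop:
  assumes "1 \<le> n" "\<forall>j<m. 0 \<le> ci j" "1 \<le> m"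
  shows "(\<Sum>j<m. ci j) \<le> real n * aps_chores m ci (1 / real n)"
proof (cases "(\<Sum>j<m. ci j) = 0")
  case True
  have n1: "0 < 1 / real n" "1 / real n \<le> 1" using assms(1) by auto
  have "ci 0 \<le> aps_chores m ci (1 / real n)"
    using assms(2,3) n1 by (intro aps_ge_chore) auto
  moreover have "0 \<le> ci 0" using assms by auto
  ultimately show ?thesis using True assms(1) by simp
next
  case False
  let ?C = "(\<Sum>j<m. ci j)"
  have Cpos: "?C > 0" using False assms(2) by (metis lessThan_iff order_le_neq_trans sum_nonneg)
  let ?p = "\<lambda>j. ci j / ?C"
  have v: "valid_p m ?p" unfolding valid_p_def using assms Cpos
    by (auto simp: sum_divide_distrib[symmetric])
  have b1: "1 / real n \<le> 1" using assms by simp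
  obtain S where S: "S\<subseteq>{..<m}" "1 / real n \<le> (\<Sum>j\<in>S. ?p j)" "(\<Sum>j\<in>S. ci j) \<le> aps_chores m ci (1 / real n)"
    using aps_ge[OF v b1] by blast
  have "(\<Sum>j\<in>S. ?p j) = (\<Sum>j\<in>S. ci j) / ?C" by (simp add: sum_divide_distrib)
  with S(2) have "?C / real n \<le> (\<Sum>j\<in>S. ci j)" using Cpos assms(1)
    by (simp add: field_simps)
  then have "?C \<le> real n * (\<Sum>j\<in>S. ci j)" using assms(1) by (simp add: field_simps)
  also have "\<dots> \<le> real n * aps_chores m ci (1 / real n)" using S(3) by (intro mult_left_mono) auto
  finally show ?thesis .
qed

lemma mod_suc_inj:
  fixes a b L :: nat
  assumes "a < L" "b < L" "(a+1) mod L = (b+1) mod L"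
  shows "a = b"
proof -
  have "(a+1) mod L = (if a + 1 = L then 0 else a + 1)" using assms(1) by auto
  moreover have "(b+1) mod L = (if b + 1 = L then 0 else b + 1)" using assms(2) by auto
  ultimately show ?thesis using assms(3) by (auto split: if_splits)
qed

lemma rotate_perm:
  assumes "rotate_cycle c n A A'"
  shows "\<exists>\<sigma>. \<sigma> ` {..<n} = {..<n} \<and> inj_on \<sigma> {..<n} \<and> (\<forall>k<n. A' k = A (\<sigma> k))
             \<and> (\<forall>a<n. cost c a (A' a) \<le> cost c a (A a))"
proof -
  obtain cyc where cy: "is_envy_cycle c n A cyc"
    and rot: "\<forall>j<length cyc. A' (cyc ! j) = A (cyc ! ((j + 1) mod length cyc))"
    and oth: "\<forall>a. a \<notin> set cyc \<longrightarrow> A' a = A a"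
    using assms unfolding rotate_cycle_def by blast
  define L where "L = length cyc"
  have L2: "2 \<le> L" and dist: "distinct cyc" and sub: "set cyc \<subseteq> {..<n}"
    and env: "\<forall>j<L. envies c A (cyc ! j) (cyc ! ((j + 1) mod L))"
    using cy unfolding is_envy_cycle_def L_def by auto
  define idx where "idx k = (THE j. j < L \<and> cyc ! j = k)" for k
  have idx1: "idx k < L \<and> cyc ! idx k = k" if "k \<in> set cyc" for k
  proof -
    have "\<exists>!j. j < L \<and> cyc ! j = k" using distinct_Ex1[OF dist that] L_def by simp
    then show ?thesis unfolding idx_def by (rule theI')
  qed
  define \<sigma> where "\<sigma> k = (if k \<in> set cyc then cyc ! ((idx k + 1) mod L) else k)" for k
  have sig_in: "\<sigma> k \<in> set cyc" if "k \<in> set cyc" for k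
  proof -
    have "(idx k + 1) mod L < length cyc" using L2 unfolding L_def by (intro mod_less_divisor) linarith
    then show ?thesis using that unfolding \<sigma>_def by simp
  qed
  have img: "\<sigma> ` {..<n} \<subseteq> {..<n}"
    using sig_in sub unfolding \<sigma>_def by auto
  have inj: "inj_on \<sigma> {..<n}"
  proof (rule inj_onI)
    fix k k' assume k: "k \<in> {..<n}" "k' \<in> {..<n}" and eq: "\<sigma> k = \<sigma> k'"
    show "k = k'"
    proof (cases "k \<in> set cyc")
      case True
      show ?thesis
      proof (cases "k' \<in> set cyc")
        case True2: True
        have "cyc ! ((idx k + 1) mod L) = cyc ! ((idx k' + 1) mod L)"
          using eq True True2 unfolding \<sigma>_def by simp
        moreover have "(idx k + 1) mod L < length cyc" "(idx k' + 1) mod L < length cyc"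
          using L2 unfolding L_def by (intro mod_less_divisor; linarith)+
        ultimately have "(idx k + 1) mod L = (idx k' + 1) mod L"
          using dist nth_eq_iff_index_eq by blast
        then have "idx k = idx k'" using idx1[OF True] idx1[OF True2] mod_suc_inj by blast
        then show ?thesis using idx1[OF True] idx1[OF True2] by metis
      next
        case False
        then show ?thesis using eq sig_in[OF True] unfolding \<sigma>_def by auto
      qed
    next
      case False
      then show ?thesis using eq sig_in unfolding \<sigma>_def by (auto split: if_splits)
    qed
  qed
  have surj: "\<sigma> ` {..<n} = {..<n}" using endo_inj_surj[OF _ img inj] by simp
  have AA: "A' k = A (\<sigma> k)" for k
  proof (cases "k \<in> set cyc")
    case True
    have "idx k < length cyc" using idx1[OF True] L_def by simp
    then have "A' (cyc ! idx k) = A (cyc ! ((idx k + 1) mod L))" using rot L_def by simp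
    then show ?thesis using idx1[OF True] True unfolding \<sigma>_def by simp
  next
    case False then show ?thesis using oth unfolding \<sigma>_def by simp
  qed
  have cst: "cost c a (A' a) \<le> cost c a (A a)" for a
  proof (cases "a \<in> set cyc")
    case True
    have "envies c A (cyc ! idx a) (cyc ! ((idx a + 1) mod L))" using env idx1[OF True] by auto
    then have "cost c a (A (\<sigma> a)) < cost c a (A a)"
      using idx1[OF True] True unfolding envies_def \<sigma>_def by simp
    then show ?thesis using AA by simp
  next
    case False then show ?thesis using AA unfolding \<sigma>_def by simp
  qed
  show ?thesis using surj inj AA cst by blast
qed

definition part :: "nat \<Rightarrow> nat \<Rightarrow> (nat \<Rightarrow> nat set) \<Rightarrow> bool" where
  "part n r A \<longleftrightarrow> (\<forall>k<n. A k \<subseteq> {..<r}) \<and> (\<forall>k<n. \<forall>k'<n. k \<noteq> k' \<longrightarrow> A k \<inter> A k' = {})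
     \<and> \<Union> (A ` {..<n}) = {..<r}"

definition good :: "(nat \<Rightarrow> nat \<Rightarrow> real) \<Rightarrow> nat \<Rightarrow> (nat \<Rightarrow> real) \<Rightarrow> (nat \<Rightarrow> nat set) \<Rightarrow> bool" where
  "good c n T A \<longleftrightarrow> (\<forall>i<n. cost c i (A i) \<le> T i \<or>
      (\<exists>d. 0 \<le> d \<and> 3 * d \<le> T i \<and> (\<forall>k<n. cost c i (A i) \<le> cost c i (A k) + d)))"

lemma part_perm:
  assumes "part n r A" "\<sigma> ` {..<n} = {..<n}" "inj_on \<sigma> {..<n}" "\<forall>k<n. A' k = A (\<sigma> k)"
  shows "part n r A'"
proof -
  have "A' ` {..<n} = A ` (\<sigma> ` {..<n})" using assms(4) by (auto simp: image_iff)
  then have "\<Union> (A' ` {..<n}) = \<Union> (A ` {..<n})" using assms(2) by simp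
  moreover have "\<sigma> k \<noteq> \<sigma> k'" if "k<n" "k'<n" "k \<noteq> k'" for k k'
    using assms(3) that by (auto dest: inj_onD)
  moreover have "\<sigma> k < n" if "k < n" for k using assms(2) that by auto
  ultimately show ?thesis using assms(1,4) unfolding part_def by simp
qed

lemma good_perm:
  assumes "good c n T A" "\<sigma> ` {..<n} \<subseteq> {..<n}" "\<forall>k<n. A' k = A (\<sigma> k)"
    "\<forall>a<n. cost c a (A' a) \<le> cost c a (A a)"
  shows "good c n T A'"
  unfolding good_def
proof (intro allI impI)
  fix i assume i: "i < n"
  from assms(1) i consider "cost c i (A i) \<le> T i"
    | d where "0 \<le> d" "3 * d \<le> T i" "\<forall>k<n. cost c i (A i) \<le> cost c i (A k) + d"
    unfolding good_def by blast
  then show "cost c i (A' i) \<le> T i \<or>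
      (\<exists>d. 0 \<le> d \<and> 3 * d \<le> T i \<and> (\<forall>k<n. cost c i (A' i) \<le> cost c i (A' k) + d))"
  proof cases
    case 1 then show ?thesis using assms(4) i by (meson order_trans)
  next
    case (2 d)
    have "\<forall>k<n. cost c i (A' i) \<le> cost c i (A' k) + d"
    proof (intro allI impI)
      fix k assume k: "k < n"
      have "\<sigma> k < n" using assms(2) k by auto
      then have "cost c i (A i) \<le> cost c i (A (\<sigma> k)) + d" using 2 by auto
      then show "cost c i (A' i) \<le> cost c i (A' k) + d" using assms(3,4) i k by fastforce
    qed
    then show ?thesis using 2 by blast
  qed
qed

lemma resolve_inv:
  assumes "(rotate_cycle c n)\<^sup>*\<^sup>* A A'" "part n r A" "good c n T A"
  shows "part n r A' \<and> good c n T A'"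
  using assms
proof (induction rule: rtranclp_induct)
  case base then show ?case by simp
next
  case (step y z)
  then have IH: "part n r y" "good c n T y" by auto
  obtain \<sigma> where s: "\<sigma> ` {..<n} = {..<n}" "inj_on \<sigma> {..<n}" "\<forall>k<n. z k = y (\<sigma> k)"
             "\<forall>a<n. cost c a (z a) \<le> cost c a (y a)"
    using rotate_perm[OF step(2)] by blast
  show ?case using part_perm[OF IH(1) s(1-3)] good_perm[OF IH(2) _ s(3,4)] s(1) by simp
qed

lemma large_case:
  assumes ido: "is_ido c n m" and nn: "\<forall>i<n. \<forall>j<m. 0 \<le> c i j" and n1: "1 \<le> n"
    and pt: "part n r A" and rm: "r < m" and i: "i < n"
    and noenv: "\<forall>k<n. cost c i (A i) \<le> cost c i (A k)"
    and big: "T < 3 * c i r" and T: "T = aps_chores m (c i) (1 / real n)"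
  shows "cost c i (A i) + c i r \<le> T"
proof -
  have nni: "\<forall>j<m. 0 \<le> c i j" using nn i by auto
  have mono: "c i r \<le> c i j" if "j \<le> r" for j
    using ido i that rm unfolding is_ido_def by (cases "j = r") auto
  have b1: "0 < 1 / real n" "1 / real n \<le> 1" using n1 by auto
  have Tc0: "c i 0 \<le> T" unfolding T using rm nni b1 by (intro aps_ge_chore) auto
  have sub: "\<forall>k<n. A k \<subseteq> {..<r}" and disj: "\<forall>k<n. \<forall>k'<n. k \<noteq> k' \<longrightarrow> A k \<inter> A k' = {}"
    and un: "\<Union> (A ` {..<n}) = {..<r}" using pt unfolding part_def by auto
  have finA: "finite (A k)" if "k < n" for k using sub that finite_subset by blast
  have costnn: "0 \<le> cost c i S" if "S \<subseteq> {..<m}" for S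
    unfolding cost_def using that nni by (intro sum_nonneg) auto
  show ?thesis
  proof (cases "\<exists>k0<n. A k0 = {}")
    case True
    then obtain k0 where "k0 < n" "A k0 = {}" by blast
    then have "cost c i (A i) \<le> 0" using noenv by (auto simp: cost_def)
    moreover have "c i r \<le> c i 0" using mono by simp
    ultimately show ?thesis using Tc0 by linarith
  next
    case False
    then have ne: "A k \<noteq> {}" if "k < n" for k using that by blast
    have cardpos: "0 < card (A k)" if "k < n" for k using ne[OF that] finA[OF that] by (simp add: card_gt_0_iff)
    define w where "w j = (if j < r then (\<Sum>k<n. if j \<in> A k then 2 / real (card (A k)) else 0)
                          else if j = r then 1 else (0::real))" for j
    define p where "p j = w j / (2 * real n + 1)" for j
    have wnn: "0 \<le> w j" for j unfolding w_def by (auto intro: sum_nonneg)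
    have wval: "\<exists>k<n. j \<in> A k \<and> w j = 2 / real (card (A k))" if jr: "j < r" for j
    proof -
      have "j \<in> \<Union> (A ` {..<n})" using un jr by simp
      then obtain k where k: "k < n" "j \<in> A k" by auto
      have "(\<Sum>k'<n. if j \<in> A k' then 2 / real (card (A k')) else 0) = 2 / real (card (A k))"
      proof -
        have "(\<Sum>k'<n. if j \<in> A k' then 2 / real (card (A k')) else 0)
             = (if j \<in> A k then 2 / real (card (A k)) else 0) +
               (\<Sum>k'\<in>{..<n} - {k}. if j \<in> A k' then 2 / real (card (A k')) else 0)"
          using k by (intro sum.remove) auto
        also have "(\<Sum>k'\<in>{..<n} - {k}. if j \<in> A k' then 2 / real (card (A k')) else 0) = 0"
        proof (intro sum.neutral ballI)
          fix k' assume k': "k' \<in> {..<n} - {k}"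
          then have "A k \<inter> A k' = {}" using disj k by auto
          then have "j \<notin> A k'" using k by auto
          then show "(if j \<in> A k' then 2 / real (card (A k')) else 0) = 0" by simp
        qed
        finally show ?thesis using k by simp
      qed
      then show ?thesis using k jr unfolding w_def by auto
    qed
    have wle2: "w j \<le> 2" for j
    proof (cases "j < r")
      case True
      then obtain k where k: "k < n" "j \<in> A k" "w j = 2 / real (card (A k))" using wval by blast
      have "1 \<le> real (card (A k))" using cardpos[OF k(1)] by simp
      then show ?thesis using k(3) by (simp add: divide_le_eq)
    next
      case False then show ?thesis unfolding w_def by auto
    qed
    have wpos: "j \<le> r" if "0 < w j" for j using that unfolding w_def by (auto split: if_splits)
    have wbig: "j < r \<and> (\<exists>k<n. A k = {j})" if "1 < w j" for j
    proof -
      have jr: "j < r" using that unfolding w_def by (auto split: if_splits)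
      then obtain k where k: "k < n" "j \<in> A k" "w j = 2 / real (card (A k))" using wval by blast
      have "card (A k) < 2"
      proof (rule ccontr)
        assume "\<not> card (A k) < 2"
        then have "2 \<le> real (card (A k))" by simp
        then have "w j \<le> 1" using k(3) by (simp add: divide_le_eq)
        then show False using that by simp
      qed
      then have "card (A k) = 1" using cardpos[OF k(1)] by simp
      then obtain x where "A k = {x}" by (rule card_1_singletonE)
      then have "A k = {j}" using k(2) by simp
      then show ?thesis using jr k(1) by blast
    qed
    have sumr: "(\<Sum>j<r. w j) = 2 * real n"
    proof -
      have "(\<Sum>j<r. w j) = (\<Sum>j<r. \<Sum>k<n. if j \<in> A k then 2 / real (card (A k)) else 0)"
        unfolding w_def by simp
      also have "\<dots> = (\<Sum>k<n. \<Sum>j<r. if j \<in> A k then 2 / real (card (A k)) else 0)"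
        by (rule sum.swap)
      also have "\<dots> = (\<Sum>k<n. (2::real))"
      proof (rule sum.cong[OF refl])
        fix k assume "k \<in> {..<n}"
        then have k: "k < n" by simp
        have "(\<Sum>j<r. if j \<in> A k then 2 / real (card (A k)) else 0) = (\<Sum>j\<in>A k. 2 / real (card (A k)))"
        proof -
          have "{..<r} \<inter> A k = A k" using sub k by auto
          moreover have "(\<Sum>j\<in>{..<r} \<inter> A k. 2 / real (card (A k))) =
               (\<Sum>j<r. if j \<in> A k then 2 / real (card (A k)) else 0)"
            by (rule sum.inter_restrict) simp
          ultimately show ?thesis by simp
        qed
        also have "\<dots> = 2" using cardpos[OF k] by simp
        finally show "(\<Sum>j<r. if j \<in> A k then 2 / real (card (A k)) else 0) = 2" .
      qed
      finally show ?thesis by simp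
    qed
    have summ: "(\<Sum>j<m. w j) = 2 * real n + 1"
    proof -
      have "(\<Sum>j<m. w j) = (\<Sum>j<Suc r. w j)"
        using rm by (intro sum.mono_neutral_right) (auto simp: w_def)
      also have "\<dots> = 2 * real n + 1" using sumr by (simp add: w_def)
      finally show ?thesis .
    qed
    have v: "valid_p m p" unfolding valid_p_def p_def
      using wnn summ by (auto simp: sum_divide_distrib[symmetric])
    obtain S where S: "S \<subseteq> {..<m}" "1 / real n \<le> (\<Sum>j\<in>S. p j)" "(\<Sum>j\<in>S. c i j) \<le> T"
      using aps_ge[OF v b1(2)] T by blast
    have finS: "finite S" using S(1) finite_subset by blast
    have "(\<Sum>j\<in>S. p j) = (\<Sum>j\<in>S. w j) / (2 * real n + 1)" unfolding p_def by (simp add: sum_divide_distrib)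
    then have eqw: "(\<Sum>j\<in>S. w j) = (2 * real n + 1) * (\<Sum>j\<in>S. p j)" by simp
    have np: "1 \<le> real n * (\<Sum>j\<in>S. p j)" using S(2) n1 by (simp add: field_simps)
    have "(2 * real n + 1) * 1 \<le> (2 * real n + 1) * (real n * (\<Sum>j\<in>S. p j))"
      using np by (intro mult_left_mono) auto
    then have A: "2 * real n + 1 \<le> real n * (\<Sum>j\<in>S. w j)" using eqw by (simp add: algebra_simps)
    have wS: "2 < (\<Sum>j\<in>S. w j)"
    proof (rule ccontr)
      assume "\<not> 2 < (\<Sum>j\<in>S. w j)"
      then have "real n * (\<Sum>j\<in>S. w j) \<le> real n * 2" by (intro mult_left_mono) auto
      with A show False by simp
    qed
    show ?thesis
    proof (cases "\<exists>j\<in>S. 1 < w j")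
      case True
      then obtain j where j: "j \<in> S" "1 < w j" by blast
      obtain k where k: "k < n" "A k = {j}" and jr: "j < r" using wbig[OF j(2)] by blast
      have "cost c i (A i) \<le> c i j" using noenv k by (auto simp: cost_def)
      have "(\<Sum>j\<in>S. w j) = w j + (\<Sum>j\<in>S - {j}. w j)" using finS j(1) by (rule sum.remove)
      then have "0 < (\<Sum>j\<in>S - {j}. w j)" using wS wle2[of j] by linarith
      have "\<exists>j'\<in>S - {j}. 0 < w j'"
      proof (rule ccontr)
        assume "\<not> (\<exists>j'\<in>S - {j}. 0 < w j')"
        then have "\<forall>x\<in>S - {j}. w x \<le> 0" by (simp add: not_less)
        then have "(\<Sum>j\<in>S - {j}. w j) \<le> 0" by (intro sum_nonpos) simp
        with \<open>0 < (\<Sum>j\<in>S - {j}. w j)\<close> show False by simp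
      qed
      then obtain j' where j': "j' \<in> S - {j}" "0 < w j'" by blast
      have "c i r \<le> c i j'" using mono wpos j' by blast
      have "c i j + c i j' = (\<Sum>x\<in>{j, j'}. c i x)" using j' by simp
      also have "\<dots> \<le> (\<Sum>x\<in>S. c i x)"
        using j j' S(1) finS nni by (intro sum_mono2) auto
      finally show ?thesis using S(3) \<open>cost c i (A i) \<le> c i j\<close> \<open>c i r \<le> c i j'\<close> by linarith
    next
      case False
      let ?S' = "S \<inter> {..r}"
      have "(\<Sum>j\<in>S. w j) = (\<Sum>j\<in>?S'. w j)"
        using finS by (intro sum.mono_neutral_right) (auto simp: w_def)
      also have "\<dots> \<le> real (card ?S') * 1" using False by (intro sum_bounded_above) auto
      finally have "2 < real (card ?S')" using wS by simp
      then have "3 \<le> real (card ?S')" by simp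
      have "real (card ?S') * c i r \<le> (\<Sum>j\<in>?S'. c i j)"
        using mono by (intro sum_bounded_below) auto
      also have "\<dots> \<le> (\<Sum>j\<in>S. c i j)"
        using finS S(1) nni by (intro sum_mono2) auto
      finally have "real (card ?S') * c i r \<le> T" using S(3) by linarith
      moreover have "3 * c i r \<le> real (card ?S') * c i r"
        using \<open>3 \<le> real (card ?S')\<close> nni rm by (intro mult_right_mono) auto
      ultimately show ?thesis using big by linarith
    qed
  qed
qed

lemma cost_insert:
  assumes "finite S" "r \<notin> S"
  shows "cost c a (insert r S) = cost c a S + c a r"
  using assms unfolding cost_def by simp

lemma alg_inv:
  assumes ido: "is_ido c n m" and nn: "\<forall>i<n. \<forall>j<m. 0 \<le> c i j" and n1: "1 \<le> n" and m1: "1 \<le> m"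
    and T: "\<And>i. T i = aps_chores m (c i) (1 / real n)"
    and alg: "alg_chores_ido c n r A"
  shows "r \<le> m \<longrightarrow> part n r A \<and> good c n T A"
  using alg
proof (induction rule: alg_chores_ido.induct)
  case init
  have "0 \<le> T i" if "i < n" for i
  proof -
    have "c i 0 \<le> T i" unfolding T using nn that m1 n1 by (intro aps_ge_chore) auto
    moreover have "0 \<le> c i 0" using nn that m1 by auto
    ultimately show ?thesis by linarith
  qed
  then show ?case unfolding part_def good_def by (auto simp: cost_def)
next
  case (step r A i A')
  show ?case
  proof
    assume rm1: "Suc r \<le> m"
    then have rm: "r < m" by simp
    have IH: "part n r A" "good c n T A" using step rm by auto
    define A1 where "A1 = A(i := insert r (A i))"
    have sub: "\<forall>k<n. A k \<subseteq> {..<r}" and disj: "\<forall>k<n. \<forall>k'<n. k \<noteq> k' \<longrightarrow> A k \<inter> A k' = {}"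
      and un: "\<Union> (A ` {..<n}) = {..<r}" using IH(1) unfolding part_def by auto
    have subx: "x < r" if "k < n" "x \<in> A k" for k x using sub that by blast
    have rnot: "r \<notin> A k" if "k < n" for k using subx that by blast
    have finA: "finite (A k)" if "k < n" for k using sub that finite_subset by blast
    have part1: "part n (Suc r) A1"
    proof -
      have "\<forall>k<n. A1 k \<subseteq> {..<Suc r}"
      proof (intro allI impI subsetI)
        fix k x assume "k < n" "x \<in> A1 k"
        then show "x \<in> {..<Suc r}" using subx[of k x] unfolding A1_def by (cases "k = i") auto
      qed
      moreover have "\<forall>k<n. \<forall>k'<n. k \<noteq> k' \<longrightarrow> A1 k \<inter> A1 k' = {}"
      proof (intro allI impI)
        fix k k' assume kk: "k < n" "k' < n" "k \<noteq> k'"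
        have d0: "A k \<inter> A k' = {}" using disj kk by blast
        have r0: "r \<notin> A k" "r \<notin> A k'" using rnot kk by auto
        show "A1 k \<inter> A1 k' = {}" unfolding A1_def using d0 r0 kk(3) by auto
      qed
      moreover have "\<Union> (A1 ` {..<n}) = {..<Suc r}"
      proof
        show "\<Union> (A1 ` {..<n}) \<subseteq> {..<Suc r}"
        proof
          fix x assume "x \<in> \<Union> (A1 ` {..<n})"
          then obtain k where "k < n" "x \<in> A1 k" by auto
          then show "x \<in> {..<Suc r}" using subx[of k x] unfolding A1_def by (cases "k = i") auto
        qed
        show "{..<Suc r} \<subseteq> \<Union> (A1 ` {..<n})"
        proof
          fix x assume xr: "x \<in> {..<Suc r}"
          show "x \<in> \<Union> (A1 ` {..<n})"
          proof (cases "x = r")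
            case True
            have "r \<in> A1 i" unfolding A1_def by simp
            moreover have "i \<in> {..<n}" using step.hyps(2) by simp
            ultimately show ?thesis using True by (intro UN_I[of i]) simp_all
          next
            case False
            have "x < Suc r" using xr by (simp only: lessThan_iff)
            then have "x < r" using False by linarith
            then have "x \<in> {..<r}" by (simp only: lessThan_iff)
            then have "x \<in> \<Union> (A ` {..<n})" unfolding un .
            then obtain k where "k < n" "x \<in> A k" by auto
            then show ?thesis unfolding A1_def by (cases "k = i") auto
          qed
        qed
      qed
      ultimately show ?thesis unfolding part_def by blast
    qed
    have grow: "cost c a (A k) \<le> cost c a (A1 k)" if "a < n" "k < n" for a k
    proof (cases "k = i")
      case True
      have "0 \<le> c a r" using nn that rm by auto
      then show ?thesis using True cost_insert[OF finA rnot, of i c a] step.hyps(2) unfolding A1_def by simp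
    next
      case False then show ?thesis unfolding A1_def by simp
    qed
    have good1: "good c n T A1"
      unfolding good_def
    proof (intro allI impI)
      fix a assume a: "a < n"
      show "cost c a (A1 a) \<le> T a \<or>
          (\<exists>d. 0 \<le> d \<and> 3 * d \<le> T a \<and> (\<forall>k<n. cost c a (A1 a) \<le> cost c a (A1 k) + d))"
      proof (cases "a = i")
        case False
        then have eq: "A1 a = A a" unfolding A1_def by simp
        from IH(2) a consider "cost c a (A a) \<le> T a"
          | d where "0 \<le> d" "3 * d \<le> T a" "\<forall>k<n. cost c a (A a) \<le> cost c a (A k) + d"
          unfolding good_def by blast
        then show ?thesis
        proof cases
          case 1 then show ?thesis using eq by simp
        next
          case (2 d)
          have "\<forall>k<n. cost c a (A1 a) \<le> cost c a (A1 k) + d"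
          proof (intro allI impI)
            fix k assume k: "k < n"
            show "cost c a (A1 a) \<le> cost c a (A1 k) + d"
              using 2(3) k grow[OF a k] eq by fastforce
          qed
          then show ?thesis using 2 by blast
        qed
      next
        case True
        have noenv: "\<forall>k<n. cost c i (A i) \<le> cost c i (A k)"
          using step.hyps(3) unfolding envies_def by (auto simp: not_less)
        have ci: "cost c i (A1 i) = cost c i (A i) + c i r"
          unfolding A1_def using cost_insert[OF finA rnot, of i c i] step.hyps(2) by simp
        show ?thesis
        proof (cases "3 * c i r \<le> T i")
          case True2: True
          have "0 \<le> c i r" using nn step.hyps(2) rm by auto
          moreover have "\<forall>k<n. cost c i (A1 i) \<le> cost c i (A1 k) + c i r"
          proof (intro allI impI)
            fix k assume k: "k < n"
            show "cost c i (A1 i) \<le> cost c i (A1 k) + c i r"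
              using noenv k grow[OF step.hyps(2) k] ci by fastforce
          qed
          ultimately show ?thesis using True True2 by blast
        next
          case False
          have "cost c i (A i) + c i r \<le> T i"
            using large_case[OF ido nn n1 IH(1) rm step.hyps(2) noenv _ T] False by simp
          then show ?thesis using True ci by simp
        qed
      qed
    qed
    have "resolve_cycles c n A1 A'" using step.hyps(4) unfolding A1_def by simp
    then show "part n (Suc r) A' \<and> good c n T A'"
      using resolve_inv[OF _ part1 good1] unfolding resolve_cycles_def by blast
  qed
qed

lemma final_bound:
  assumes nn: "\<forall>i<n. \<forall>j<m. 0 \<le> c i j" and n1: "1 \<le> n" and m1: "1 \<le> m"
    and T: "\<And>i. T i = aps_chores m (c i) (1 / real n)"
    and pt: "part n m A" and gd: "good c n T A" and i: "i < n"
  shows "cost c i (A i) \<le> (4 * real n - 1) / (3 * real n) * T i"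
proof -
  have nni: "\<forall>j<m. 0 \<le> c i j" using nn i by auto
  have T0: "0 \<le> T i"
  proof -
    have "c i 0 \<le> T i" unfolding T using nni m1 n1 by (intro aps_ge_chore) auto
    moreover have "0 \<le> c i 0" using nni m1 by auto
    ultimately show ?thesis by linarith
  qed
  have alpha: "1 \<le> (4 * real n - 1) / (3 * real n)" using n1 by (simp add: field_simps)
  have sub: "\<forall>k<n. A k \<subseteq> {..<m}" and disj: "\<forall>k<n. \<forall>k'<n. k \<noteq> k' \<longrightarrow> A k \<inter> A k' = {}"
    and un: "\<Union> (A ` {..<n}) = {..<m}" using pt unfolding part_def by auto
  have finA: "finite (A k)" if "k < n" for k using sub that finite_subset by blast
  from gd i consider "cost c i (A i) \<le> T i"
    | d where "0 \<le> d" "3 * d \<le> T i" "\<forall>k<n. cost c i (A i) \<le> cost c i (A k) + d"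
    unfolding good_def by blast
  then show ?thesis
  proof cases
    case 1
    have "T i \<le> (4 * real n - 1) / (3 * real n) * T i"
      using alpha T0 mult_right_mono[OF alpha T0] by simp
    then show ?thesis using 1 by linarith
  next
    case (2 d)
    let ?V = "cost c i (A i)"
    have "(\<Sum>j<m. c i j) = (\<Sum>k<n. cost c i (A k))"
      unfolding cost_def un[symmetric] using finA disj by (intro sum.UNION_disjoint) auto
    also have "\<dots> = ?V + (\<Sum>k\<in>{..<n} - {i}. cost c i (A k))"
      using i by (intro sum.remove) auto
    finally have E: "(\<Sum>j<m. c i j) = ?V + (\<Sum>k\<in>{..<n} - {i}. cost c i (A k))" .
    have "(\<Sum>k\<in>{..<n} - {i}. ?V - d) \<le> (\<Sum>k\<in>{..<n} - {i}. cost c i (A k))"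
      using 2(3) by (intro sum_mono) (simp add: algebra_simps)
    moreover have "(\<Sum>k\<in>{..<n} - {i}. ?V - d) = real (n - 1) * (?V - d)"
      using i by (simp add: card_Diff_singleton)
    ultimately have "?V + real (n - 1) * (?V - d) \<le> (\<Sum>j<m. c i j)" using E by linarith
    also have "\<dots> \<le> real n * T i" unfolding T using aps_ge_prop[OF n1 nni m1] .
    finally have X: "?V + real (n - 1) * (?V - d) \<le> real n * T i" .
    have "real (n - 1) = real n - 1" using n1 by simp
    with X have F0: "real n * ?V \<le> real n * T i + (real n - 1) * d" by (simp add: algebra_simps)
    have G: "(real n - 1) * (3 * d) \<le> (real n - 1) * T i"
      using 2 n1 by (intro mult_left_mono) auto
    have e0: "3 * ((real n - 1) * d) = (real n - 1) * (3 * d)" by simp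
    have e1: "3 * real n * ?V = 3 * (real n * ?V)" by simp
    have e2: "(4 * real n - 1) * T i = 3 * (real n * T i) + (real n - 1) * T i"
      by (simp add: algebra_simps)
    have "3 * real n * ?V \<le> (4 * real n - 1) * T i" unfolding e1 e2 using F0 G e0 by linarith
    then show ?thesis using n1 by (simp add: field_simps)
  qed
qed

lemma ido_perm:
  "\<exists>\<pi>. bij_betw \<pi> {..<m} {..<m} \<and> (\<forall>j<m. ido_of c m i j = c i (\<pi> j))"
proof -
  let ?xs = "map (c i) [0..<m]"
  let ?ys = "rev (sort ?xs)"
  have "mset ?ys = mset ?xs" by simp
  then obtain f where f: "bij_betw f {..<length ?ys} {..<length ?xs}"
      "\<forall>j<length ?ys. ?ys ! j = ?xs ! (f j)"
    using permutation_Ex_bij by blast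
  have L: "length ?ys = m" "length ?xs = m" by simp_all
  have "\<forall>j<m. ido_of c m i j = c i (f j)"
  proof (intro allI impI)
    fix j assume j: "j < m"
    have "f j < m" using f(1) j L by (auto dest: bij_betw_apply)
    then show "ido_of c m i j = c i (f j)" using f(2) j L unfolding ido_of_def by auto
  qed
  then show ?thesis using f(1) L by auto
qed

lemma ido_is_ido: "is_ido (ido_of c m) n m"
  unfolding is_ido_def
proof (intro allI impI)
  fix i j k assume jk: "j < k \<and> k < m"
  let ?s = "sort (map (c i) [0..<m])"
  have ls: "length ?s = m" by simp
  have "?s ! (m - Suc k) \<le> ?s ! (m - Suc j)"
    using jk ls by (intro sorted_nth_mono) auto
  then show "ido_of c m i k \<le> ido_of c m i j"
    unfolding ido_of_def using jk ls by (simp add: rev_nth)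
qed

lemma ido_nonneg:
  assumes nn: "\<forall>i<n. \<forall>j<m. 0 \<le> c i j"
  shows "\<forall>i<n. \<forall>j<m. 0 \<le> ido_of c m i j"
proof (intro allI impI)
  fix i j assume i: "i < n" and j: "j < m"
  obtain \<pi> where p: "bij_betw \<pi> {..<m} {..<m}" "\<forall>j<m. ido_of c m i j = c i (\<pi> j)"
    using ido_perm by blast
  have "\<pi> j < m" using p(1) j by (auto dest: bij_betw_apply)
  then show "0 \<le> ido_of c m i j" using p(2) j nn i by auto
qed

lemma aps_ido_le:
  assumes m1: "1 \<le> m" and b1: "b \<le> 1"
  shows "aps_chores m (ido_of c m i) b \<le> aps_chores m (c i) b"
proof (rule aps_le[OF m1])
  fix p assume vp: "valid_p m p"
  obtain \<pi> where pi: "bij_betw \<pi> {..<m} {..<m}" "\<forall>j<m. ido_of c m i j = c i (\<pi> j)"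
    using ido_perm by blast
  define \<rho> where "\<rho> = inv_into {..<m} \<pi>"
  have rho: "bij_betw \<rho> {..<m} {..<m}" unfolding \<rho>_def using pi(1) by (rule bij_betw_inv_into)
  have pr: "\<pi> (\<rho> y) = y" if "y < m" for y
    unfolding \<rho>_def using pi(1) that by (simp add: bij_betw_inv_into_right)
  define p' where "p' j = p (\<rho> j)" for j
  have "(\<Sum>j<m. p' j) = (\<Sum>j<m. p j)"
    unfolding p'_def using rho by (rule sum.reindex_bij_betw)
  moreover have "\<forall>j<m. 0 \<le> p' j" unfolding p'_def using vp rho
    by (auto simp: valid_p_def dest: bij_betw_apply)
  ultimately have vp': "valid_p m p'" using vp unfolding valid_p_def by simp
  show "\<exists>S\<subseteq>{..<m}. b \<le> (\<Sum>j\<in>S. p j) \<and> (\<Sum>j\<in>S. ido_of c m i j) \<le> aps_chores m (c i) b"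
  proof -
    obtain S' where S': "S' \<subseteq> {..<m}" "b \<le> (\<Sum>j\<in>S'. p' j)" "(\<Sum>j\<in>S'. c i j) \<le> aps_chores m (c i) b"
      using aps_ge[OF vp' b1] by blast
    have injS: "inj_on \<rho> S'" using rho S'(1) by (meson bij_betw_def inj_on_subset)
    have sub: "\<rho> ` S' \<subseteq> {..<m}" using rho S'(1) by (auto dest: bij_betw_apply)
    have "(\<Sum>j\<in>\<rho> ` S'. p j) = (\<Sum>j\<in>S'. p' j)" unfolding p'_def using injS by (simp add: sum.reindex)
    moreover have "(\<Sum>j\<in>\<rho> ` S'. ido_of c m i j) = (\<Sum>j\<in>S'. c i j)"
    proof -
      have "(\<Sum>j\<in>\<rho> ` S'. ido_of c m i j) = (\<Sum>j\<in>S'. ido_of c m i (\<rho> j))" using injS by (simp add: sum.reindex)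
      also have "\<dots> = (\<Sum>j\<in>S'. c i j)"
      proof (rule sum.cong[OF refl])
        fix j assume "j \<in> S'"
        then have j: "j < m" using S'(1) by auto
        then have "\<rho> j < m" using rho by (auto dest: bij_betw_apply)
        then show "ido_of c m i (\<rho> j) = c i j" using pi(2) pr[OF j] by simp
      qed
      finally show ?thesis .
    qed
    ultimately show ?thesis using S' sub by auto
  qed
qed

lemma pick_le:
  assumes R: "R \<subseteq> {..<m}" and j: "j < m" and cR: "Suc j \<le> card R"
  shows "\<exists>e\<in>R. c i e \<le> ido_of c m i j"
proof -
  obtain \<pi> where pi: "bij_betw \<pi> {..<m} {..<m}" "\<forall>j<m. ido_of c m i j = c i (\<pi> j)"
    using ido_perm by blast
  define \<rho> where "\<rho> = inv_into {..<m} \<pi>"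
  have rho: "bij_betw \<rho> {..<m} {..<m}" unfolding \<rho>_def using pi(1) by (rule bij_betw_inv_into)
  have pr: "\<pi> (\<rho> y) = y" if "y < m" for y
    unfolding \<rho>_def using pi(1) that by (simp add: bij_betw_inv_into_right)
  have injR: "inj_on \<rho> R" using rho R by (meson bij_betw_def inj_on_subset)
  have cQ: "card (\<rho> ` R) = card R" using injR by (rule card_image)
  have "\<exists>q\<in>\<rho> ` R. j \<le> q"
  proof (rule ccontr)
    assume "\<not> (\<exists>q\<in>\<rho> ` R. j \<le> q)"
    then have "\<rho> ` R \<subseteq> {..<j}" by auto
    then have "card (\<rho> ` R) \<le> j" using card_mono[of "{..<j}"] by fastforce
    with cQ cR show False by simp
  qed
  then obtain e where e: "e \<in> R" "j \<le> \<rho> e" by blast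
  have em: "e < m" using e(1) R by auto
  have rm: "\<rho> e < m" using rho em by (auto dest: bij_betw_apply)
  have "ido_of c m i (\<rho> e) \<le> ido_of c m i j"
    using ido_is_ido[of c m "Suc i"] e(2) rm unfolding is_ido_def
    by (cases "j = \<rho> e") auto
  moreover have "ido_of c m i (\<rho> e) = c i e" using pi(2) rm pr[OF em] by simp
  ultimately show ?thesis using e(1) by auto
qed

lemma red_inv:
  assumes "reduction_pick c n m A k R B" and nn: "\<forall>i<n. \<forall>j<m. 0 \<le> c i j"
  shows "R \<subseteq> {..<m} \<and> card R = m - k \<and> k \<le> m \<and> (\<forall>a. finite (B a)) \<and>
    (\<forall>a<n. cost c a (B a) \<le> (\<Sum>j\<in>A a \<inter> {m - k..<m}. ido_of c m a j))"
  using assms(1)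
proof (induction rule: reduction_pick.induct)
  case init
  then show ?case by (simp add: cost_def)
next
  case (step k R B i e)
  have IH: "R \<subseteq> {..<m}" "card R = m - k" "\<forall>a. finite (B a)"
    "\<forall>a<n. cost c a (B a) \<le> (\<Sum>j\<in>A a \<inter> {m - k..<m}. ido_of c m a j)"
    using step.IH by auto
  have km: "k < m" and i: "i < n" and jA: "m - 1 - k \<in> A i" and eR: "e \<in> R"
    and emin: "\<forall>e'\<in>R. c i e \<le> c i e'" using step.hyps by auto
  have nn': "\<forall>i<n. \<forall>j<m. 0 \<le> ido_of c m i j" using ido_nonneg[OF nn] .
  have em: "e < m" using eR IH(1) by auto
  have R': "R - {e} \<subseteq> {..<m}" using IH(1) by auto
  have finR: "finite R" using IH(1) finite_subset by blast
  have cR': "card (R - {e}) = m - Suc k" using IH(2) eR finR by simp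
  have finB: "\<forall>a. finite ((B(i := insert e (B i))) a)" using IH(3) by simp
  have setEq: "A i \<inter> {m - Suc k..<m} = insert (m - 1 - k) (A i \<inter> {m - k..<m})"
    using jA km by auto
  have notin: "m - 1 - k \<notin> A i \<inter> {m - k..<m}" using km by auto
  have bnd: "\<forall>a<n. cost c a ((B(i := insert e (B i))) a) \<le> (\<Sum>j\<in>A a \<inter> {m - Suc k..<m}. ido_of c m a j)"
  proof (intro allI impI)
    fix a assume a: "a < n"
    show "cost c a ((B(i := insert e (B i))) a) \<le> (\<Sum>j\<in>A a \<inter> {m - Suc k..<m}. ido_of c m a j)"
    proof (cases "a = i")
      case True
      have "0 \<le> c i e" using nn i em by auto
      then have c1: "cost c i (insert e (B i)) \<le> cost c i (B i) + c i e"
        using IH(3) unfolding cost_def by (cases "e \<in> B i") (auto simp: insert_absorb)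
      have j1: "m - 1 - k < m" using km by simp
      have j2: "Suc (m - 1 - k) \<le> card R" using km IH(2) by simp
      obtain e' where e': "e' \<in> R" "c i e' \<le> ido_of c m i (m - 1 - k)"
        using pick_le[OF IH(1) j1 j2, where i=i and c=c] by blast
      have c2: "c i e \<le> ido_of c m i (m - 1 - k)" using emin e' by force
      have "(\<Sum>j\<in>A i \<inter> {m - Suc k..<m}. ido_of c m i j)
            = ido_of c m i (m - 1 - k) + (\<Sum>j\<in>A i \<inter> {m - k..<m}. ido_of c m i j)"
        unfolding setEq using notin by (simp add: sum.insert)
      then show ?thesis using True c1 c2 IH(4) i by force
    next
      case False
      have "(\<Sum>j\<in>A a \<inter> {m - k..<m}. ido_of c m a j) \<le> (\<Sum>j\<in>A a \<inter> {m - Suc k..<m}. ido_of c m a j)"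
        using nn' a by (intro sum_mono2) auto
      then show ?thesis using False IH(4) a by force
    qed
  qed
  show ?case using R' cR' km finB bnd by simp
qed

lemma red_final:
  assumes "reduction_pick c n m A m {} B" and nn: "\<forall>i<n. \<forall>j<m. 0 \<le> c i j"
    and sub: "\<forall>k<n. A k \<subseteq> {..<m}" and i: "i < n"
  shows "cost c i (B i) \<le> cost (ido_of c m) i (A i)"
proof -
  have "cost c i (B i) \<le> (\<Sum>j\<in>A i \<inter> {m - m..<m}. ido_of c m i j)"
    using red_inv[OF assms(1) nn] i by auto
  moreover have "A i \<subseteq> {..<m}" using sub i by blast
  then have "A i \<inter> {m - m..<m} = A i" by auto
  ultimately show ?thesis unfolding cost_def by simp
qed

theorem theorem4:
  fixes c :: "nat \<Rightarrow> nat \<Rightarrow> real" and n m :: nat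
  assumes "1 \<le> n" and "1 \<le> m"
    and nonneg: "\<forall>i<n. \<forall>j<m. 0 \<le> c i j"
  shows "(is_ido c n m \<longrightarrow>
            (\<forall>A. alg_chores_ido c n m A \<longrightarrow>
               (\<forall>i<n. cost c i (A i) \<le> (4 * real n - 1) / (3 * real n) * aps_chores m (c i) (1 / real n))))
       \<and> (\<forall>A B. alg_chores_ido (ido_of c m) n m A \<and> reduction_pick c n m A m {} B \<longrightarrow>
               (\<forall>i<n. cost c i (B i) \<le> (4 * real n - 1) / (3 * real n) * aps_chores m (c i) (1 / real n)))"
proof (intro conjI impI allI)
  fix A i assume ido: "is_ido c n m" and alg: "alg_chores_ido c n m A" and i: "i < n"
  define T where "T i = aps_chores m (c i) (1 / real n)" for i
  have "part n m A \<and> good c n T A"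
    using alg_inv[OF ido nonneg assms(1,2) _ alg] T_def by simp
  then show "cost c i (A i) \<le> (4 * real n - 1) / (3 * real n) * aps_chores m (c i) (1 / real n)"
    using final_bound[OF nonneg assms(1,2), of T A i] T_def i by simp
next
  fix A B i assume AB: "alg_chores_ido (ido_of c m) n m A \<and> reduction_pick c n m A m {} B" and i: "i < n"
  let ?c = "ido_of c m"
  define T where "T i = aps_chores m (?c i) (1 / real n)" for i
  have pg: "part n m A \<and> good ?c n T A"
    using alg_inv[OF ido_is_ido ido_nonneg[OF nonneg] assms(1,2), of T m A] AB T_def by simp
  then have "cost ?c i (A i) \<le> (4 * real n - 1) / (3 * real n) * T i"
    using final_bound[OF ido_nonneg[OF nonneg] assms(1,2), of T A i] T_def i by simp
  also have "\<dots> \<le> (4 * real n - 1) / (3 * real n) * aps_chores m (c i) (1 / real n)"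
  proof (rule mult_left_mono)
    show "T i \<le> aps_chores m (c i) (1 / real n)" unfolding T_def
      using assms(1,2) by (intro aps_ido_le) auto
    show "0 \<le> (4 * real n - 1) / (3 * real n)" using assms(1) by simp
  qed
  finally have X: "cost ?c i (A i) \<le> (4 * real n - 1) / (3 * real n) * aps_chores m (c i) (1 / real n)" .
  have "\<forall>k<n. A k \<subseteq> {..<m}" using pg unfolding part_def by blast
  then have "cost c i (B i) \<le> cost ?c i (A i)" using red_final[OF _ nonneg _ i] AB by blast
  with X show "cost c i (B i) \<le> (4 * real n - 1) / (3 * real n) * aps_chores m (c i) (1 / real n)"
    by linarith
qed

end
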